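(* (a) For all flow graphs $h_1,h_2$ over a flow monoid with $h_1.X=h_2.X$ and $h_1.\mathit{in}=h_2.\mathit{in}$: $\mathrm{FP}(h_1,h_2)\neq\emptyset$ if and only if $h_1.X\in\mathrm{FP}(h_1,h_2)$. (b) Flow footprints are not closed under intersection and need not have a unique inclusion-minimal element: there exist such flow graphs $h_1,h_2$ and sets $Y_1,Y_2\in\mathrm{FP}(h_1,h_2)$ with $Y_1\cap Y_2\notin\mathrm{FP}(h_1,h_2)$.
   Context: A flow monoid is a commutative monoid $(\mathbb{M},+,0)$ such that $n\le m :\iff \exists o.\ m=n+o$ is a partial order in which every ascending chain $K$ has a least upper bound $\bigsqcup K$, and $n+\bigsqcup K=\bigsqcup(n+K)$. $\mathcal{C}(\mathbb{M}\to\mathbb{M})$ is the set of functions commuting with least upper bounds of ascending chains. Infinite sums denote least upper bounds of finite partial sums. A flow graph is $h=(X,E,\mathit{in})$ with $X\subseteq\mathbb{N}$ finite, $E:X\times\mathbb{N}\to\mathcal{C}(\mathbb{M}\to\mathbb{M})$, $\mathit{in}:(\mathbb{N}\setminus X)\times X\to\mathbb{M}$; $\mathit{in}_x=\sum_{y\in\mathbb{N}\setminus X}\mathit{in}(y,x)$; the flow $h.\mathit{flow}$ is the least $\mathit{flow}:X\to\mathbb{M}$ with $\mathit{flow}(x)=\mathit{in}_x+\sum_{y\in X}E(y,x)(\mathit{flow}(y))$; the outflow is $h.\mathit{out}(x,y)=E(x,y)(h.\mathit{flow}(x))$ for $x\in X$, $y\notin X$. Transfer function: $\mathsf{tf}(h)(\mathit{in}')$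 is the outflow of $(X,E,\mathit{in}')$. $\mathsf{tf}(h_1)=_{\mathit{in}}\mathsf{tf}(h_2)$ means equality on all inflows $\mathit{in}'\le\mathit{in}$ (pointwise). Contextual equivalence $h_1\approx h_2$: $h_1.X=h_2.X$, $h_1.\mathit{in}=h_2.\mathit{in}$, $\mathsf{tf}(h_1)=_{h_1.\mathit{in}}\mathsf{tf}(h_2)$. Restriction: for $Y\subseteq\mathbb{N}$, $h|_Y=(X\cap Y,\ E|_{(X\cap Y)\times\mathbb{N}},\ \mathit{in}')$ with $\mathit{in}'(z,y)=\mathit{in}(z,y)$ for $z\notin X$, $y\in X\cap Y$, and $\mathit{in}'(x,y)=E(x,y)(h.\mathit{flow}(x))$ for $x\in X\setminus Y$, $y\in X\cap Y$. Footprints: for $h_1,h_2$ with $X=h_1.X=h_2.X$ and $h_1.\mathit{in}=h_2.\mathit{in}$, $\mathrm{FP}(h_1,h_2)$ is the set of $Y\subseteq X$ such that $h_1|_Y\approx h_2|_Y$ and $h_1|_{X\setminus Y}=h_2|_{X\setminus Y}$. *)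

theory Defs
  imports Main "HOL-Library.Extended_Nat"
begin

definition fm_le :: "'m::comm_monoid_add \<Rightarrow> 'm \<Rightarrow> bool" where
  "fm_le n m \<longleftrightarrow> (\<exists>k. m = n + k)"

definition fm_is_lub :: "'m::comm_monoid_add set \<Rightarrow> 'm \<Rightarrow> bool" where
  "fm_is_lub S l \<longleftrightarrow> (\<forall>s\<in>S. fm_le s l) \<and> (\<forall>u. (\<forall>s\<in>S. fm_le s u) \<longrightarrow> fm_le l u)"

definition fm_asc :: "(nat \<Rightarrow> 'm::comm_monoid_add) \<Rightarrow> bool" where
  "fm_asc K \<longleftrightarrow> (\<forall>i. fm_le (K i) (K (Suc i)))"

definition fm_lub :: "(nat \<Rightarrow> 'm::comm_monoid_add) \<Rightarrow> 'm" where
  "fm_lub K = (THE l. fm_is_lub (range K) l)"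

definition flow_monoid :: "'m::comm_monoid_add itself \<Rightarrow> bool" where
  "flow_monoid _ \<longleftrightarrow>
     (\<forall>n m :: 'm. fm_le n m \<longrightarrow> fm_le m n \<longrightarrow> n = m) \<and>
     (\<forall>K :: nat \<Rightarrow> 'm. fm_asc K \<longrightarrow> (\<exists>l. fm_is_lub (range K) l)) \<and>
     (\<forall>(K :: nat \<Rightarrow> 'm) n. fm_asc K \<longrightarrow> n + fm_lub K = fm_lub (\<lambda>i. n + K i))"

definition fm_cont :: "('m::comm_monoid_add \<Rightarrow> 'm) \<Rightarrow> bool" where
  "fm_cont f \<longleftrightarrow> (\<forall>K. fm_asc K \<longrightarrow> fm_is_lub (range (\<lambda>i. f (K i))) (f (fm_lub K)))"

definition fm_infsum :: "(nat \<Rightarrow> 'm::comm_monoid_add) \<Rightarrow> nat set \<Rightarrow> 'm" where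
  "fm_infsum f A = fm_lub (\<lambda>n. \<Sum>y\<in>A \<inter> {..<n}. f y)"

text \<open>A flow graph (X, E, in).  Only the values of E on X x nat and of in on
  (nat - X) x X are meaningful; all notions below only inspect those values.\<close>
record 'm fgraph =
  fX :: "nat set"
  fE :: "nat \<Rightarrow> nat \<Rightarrow> 'm \<Rightarrow> 'm"
  fin :: "nat \<Rightarrow> nat \<Rightarrow> 'm"

definition fg_wf :: "'m::comm_monoid_add fgraph \<Rightarrow> bool" where
  "fg_wf h \<longleftrightarrow> finite (fX h) \<and> (\<forall>x\<in>fX h. \<forall>y. fm_cont (fE h x y))"

definition fg_inx :: "'m::comm_monoid_add fgraph \<Rightarrow> nat \<Rightarrow> 'm" where
  "fg_inx h x = fm_infsum (\<lambda>y. fin h y x) (- fX h)"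

definition fg_is_flow :: "'m::comm_monoid_add fgraph \<Rightarrow> (nat \<Rightarrow> 'm) \<Rightarrow> bool" where
  "fg_is_flow h f \<longleftrightarrow>
     (\<forall>x\<in>fX h. f x = fg_inx h x + (\<Sum>y\<in>fX h. fE h y x (f y)))"

definition fg_flow :: "'m::comm_monoid_add fgraph \<Rightarrow> nat \<Rightarrow> 'm" where
  "fg_flow h = (THE f. fg_is_flow h f
       \<and> (\<forall>g. fg_is_flow h g \<longrightarrow> (\<forall>x\<in>fX h. fm_le (f x) (g x)))
       \<and> (\<forall>x. x \<notin> fX h \<longrightarrow> f x = 0))"

text \<open>Outflow, meaningful for x in X and y not in X.\<close>
definition fg_out :: "'m::comm_monoid_add fgraph \<Rightarrow> nat \<Rightarrow> nat \<Rightarrow> 'm" where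
  "fg_out h x y = fE h x y (fg_flow h x)"

definition fg_tf :: "'m::comm_monoid_add fgraph \<Rightarrow> (nat \<Rightarrow> nat \<Rightarrow> 'm) \<Rightarrow> nat \<Rightarrow> nat \<Rightarrow> 'm" where
  "fg_tf h inn = fg_out (h\<lparr>fin := inn\<rparr>)"

definition fg_in_eq :: "nat set \<Rightarrow> (nat \<Rightarrow> nat \<Rightarrow> 'm) \<Rightarrow> (nat \<Rightarrow> nat \<Rightarrow> 'm) \<Rightarrow> bool" where
  "fg_in_eq X i1 i2 \<longleftrightarrow> (\<forall>z. z \<notin> X \<longrightarrow> (\<forall>y\<in>X. i1 z y = i2 z y))"

definition fg_tf_eq_upto :: "nat set \<Rightarrow> 'm::comm_monoid_add fgraph \<Rightarrow> 'm fgraph \<Rightarrow> (nat \<Rightarrow> nat \<Rightarrow> 'm) \<Rightarrow> bool" where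
  "fg_tf_eq_upto X h1 h2 inn \<longleftrightarrow>
     (\<forall>inn'. (\<forall>z. z \<notin> X \<longrightarrow> (\<forall>y\<in>X. fm_le (inn' z y) (inn z y))) \<longrightarrow>
        (\<forall>x\<in>X. \<forall>y. y \<notin> X \<longrightarrow> fg_tf h1 inn' x y = fg_tf h2 inn' x y))"

definition fg_approx :: "'m::comm_monoid_add fgraph \<Rightarrow> 'm fgraph \<Rightarrow> bool" where
  "fg_approx h1 h2 \<longleftrightarrow> fX h1 = fX h2 \<and> fg_in_eq (fX h1) (fin h1) (fin h2)
       \<and> fg_tf_eq_upto (fX h1) h1 h2 (fin h1)"

text \<open>Equality of flow graphs (as triples with E : X x nat -> C and in : (nat - X) x X -> M).\<close>
definition fg_eq :: "'m::comm_monoid_add fgraph \<Rightarrow> 'm fgraph \<Rightarrow> bool" where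
  "fg_eq h1 h2 \<longleftrightarrow> fX h1 = fX h2 \<and> (\<forall>x\<in>fX h1. \<forall>y. fE h1 x y = fE h2 x y)
       \<and> fg_in_eq (fX h1) (fin h1) (fin h2)"

definition fg_restr :: "'m::comm_monoid_add fgraph \<Rightarrow> nat set \<Rightarrow> 'm fgraph" where
  "fg_restr h Y = \<lparr> fX = fX h \<inter> Y, fE = fE h,
     fin = (\<lambda>z y. if z \<in> fX h then fE h z y (fg_flow h z) else fin h z y) \<rparr>"

definition fg_FP :: "'m::comm_monoid_add fgraph \<Rightarrow> 'm fgraph \<Rightarrow> nat set set" where
  "fg_FP h1 h2 = {Y. Y \<subseteq> fX h1 \<and> fg_approx (fg_restr h1 Y) (fg_restr h2 Y)
       \<and> fg_eq (fg_restr h1 (fX h1 - Y)) (fg_restr h2 (fX h1 - Y))}"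

end

theory Submission
  imports Defs "HOL-Library.Extended_Nat"
begin

lemma fm_le_refl[simp]: "fm_le (a::'m::comm_monoid_add) a"
  unfolding fm_le_def by (rule exI[of _ 0]) simp

lemma fm_le_0[simp]: "fm_le 0 (a::'m::comm_monoid_add)"
  unfolding fm_le_def by auto

lemma fm_le_trans[trans]: "fm_le (a::'m::comm_monoid_add) b \<Longrightarrow> fm_le b c \<Longrightarrow> fm_le a c"
  unfolding fm_le_def by (metis add.assoc)

lemma fm_le_add: "fm_le (a::'m::comm_monoid_add) b \<Longrightarrow> fm_le c d \<Longrightarrow> fm_le (a + c) (b + d)"
  unfolding fm_le_def by (metis add.assoc add.commute)

lemma fm_le_addR: "fm_le (a::'m::comm_monoid_add) (a + b)"
  unfolding fm_le_def by auto

lemma fm_le_addL: "fm_le (b::'m::comm_monoid_add) (a + b)"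
  unfolding fm_le_def by (auto simp: add.commute)

lemma fm_sum_mono: "(\<And>x. x \<in> A \<Longrightarrow> fm_le (f x) (g x)) \<Longrightarrow> fm_le (sum f A) (sum (g::_\<Rightarrow>'m::comm_monoid_add) A)"
proof (induction A rule: infinite_finite_induct)
  case (insert x F)
  then show ?case by (simp add: fm_le_add)
qed simp_all

lemma fm_sum_subset: "finite B \<Longrightarrow> A \<subseteq> B \<Longrightarrow> fm_le (sum f A) (sum (f::_\<Rightarrow>'m::comm_monoid_add) B)"
  using sum.subset_diff[of A B f] by (metis fm_le_addL)

context
  fixes T :: "'m::comm_monoid_add itself"
  assumes FM: "flow_monoid TYPE('m)"
begin

lemma fm_antisym: "fm_le (a::'m) b \<Longrightarrow> fm_le b a \<Longrightarrow> a = b"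
  using FM unfolding flow_monoid_def by blast

lemma fm_lub_ex: "fm_asc (K::nat\<Rightarrow>'m) \<Longrightarrow> \<exists>l. fm_is_lub (range K) l"
  using FM unfolding flow_monoid_def by blast

lemma fm_lub_add_axiom: "fm_asc (K::nat\<Rightarrow>'m) \<Longrightarrow> n + fm_lub K = fm_lub (\<lambda>i. n + K i)"
  using FM unfolding flow_monoid_def by blast

lemma fm_is_lub_unique: "fm_is_lub S (l::'m) \<Longrightarrow> fm_is_lub S l' \<Longrightarrow> l = l'"
  unfolding fm_is_lub_def by (meson fm_antisym)

lemma fm_lub_eqI: "fm_is_lub (range K) (l::'m) \<Longrightarrow> fm_lub K = l"
  unfolding fm_lub_def using fm_is_lub_unique by blast

lemma fm_lub_is: "fm_asc (K::nat\<Rightarrow>'m) \<Longrightarrow> fm_is_lub (range K) (fm_lub K)"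
  using fm_lub_ex fm_lub_eqI by blast

lemma fm_lub_upper: "fm_asc (K::nat\<Rightarrow>'m) \<Longrightarrow> fm_le (K i) (fm_lub K)"
  using fm_lub_is unfolding fm_is_lub_def by blast

lemma fm_lub_least: "fm_asc (K::nat\<Rightarrow>'m) \<Longrightarrow> (\<And>i. fm_le (K i) u) \<Longrightarrow> fm_le (fm_lub K) u"
  using fm_lub_is unfolding fm_is_lub_def by blast

lemma fm_asc_mono: "fm_asc (K::nat\<Rightarrow>'m) \<Longrightarrow> i \<le> j \<Longrightarrow> fm_le (K i) (K j)"
proof (induction j)
  case (Suc j)
  then show ?case unfolding fm_asc_def by (metis fm_le_refl fm_le_trans le_Suc_eq)
qed simp

lemma fm_lub_mono: "fm_asc (K::nat\<Rightarrow>'m) \<Longrightarrow> fm_asc L \<Longrightarrow> (\<And>i. fm_le (K i) (L i)) \<Longrightarrow> fm_le (fm_lub K) (fm_lub L)"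
  by (meson fm_le_trans fm_lub_least fm_lub_upper)

lemma fm_asc_add: "fm_asc (K::nat\<Rightarrow>'m) \<Longrightarrow> fm_asc L \<Longrightarrow> fm_asc (\<lambda>i. K i + L i)"
  unfolding fm_asc_def by (simp add: fm_le_add)

lemma fm_lub_add: assumes K: "fm_asc (K::nat\<Rightarrow>'m)" and L: "fm_asc L"
  shows "fm_lub (\<lambda>i. K i + L i) = fm_lub K + fm_lub L"
proof (rule fm_antisym)
  have KL: "fm_asc (\<lambda>i. K i + L i)" using K L by (rule fm_asc_add)
  show "fm_le (fm_lub (\<lambda>i. K i + L i)) (fm_lub K + fm_lub L)"
    by (rule fm_lub_least[OF KL]) (simp add: fm_le_add fm_lub_upper K L)
  have "fm_lub K + fm_lub L = fm_lub (\<lambda>i. fm_lub K + L i)"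
    using fm_lub_add_axiom[OF L] .
  also have "fm_le \<dots> (fm_lub (\<lambda>i. K i + L i))"
  proof (rule fm_lub_least)
    show "fm_asc (\<lambda>i. fm_lub K + L i)" using L unfolding fm_asc_def by (simp add: fm_le_add)
    fix i
    have "fm_lub K + L i = fm_lub (\<lambda>j. L i + K j)"
      using fm_lub_add_axiom[OF K, of "L i"] by (simp add: add.commute)
    also have "fm_le \<dots> (fm_lub (\<lambda>i. K i + L i))"
    proof (rule fm_lub_least)
      show "fm_asc (\<lambda>j. L i + K j)" using K unfolding fm_asc_def by (simp add: fm_le_add)
      fix j
      have "fm_le (L i + K j) (K (max i j) + L (max i j))"
        by (metis K L add.commute fm_asc_mono fm_le_add max.cobounded1 max.cobounded2)
      also have "fm_le \<dots> (fm_lub (\<lambda>i. K i + L i))" using fm_lub_upper[OF KL] .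
      finally show "fm_le (L i + K j) (fm_lub (\<lambda>i. K i + L i))" .
    qed
    finally show "fm_le (fm_lub K + L i) (fm_lub (\<lambda>i. K i + L i))" .
  qed
  finally show "fm_le (fm_lub K + fm_lub L) (fm_lub (\<lambda>i. K i + L i))" .
qed


lemma fm_asc_sum: "(\<And>a. a \<in> A \<Longrightarrow> fm_asc (K a :: nat\<Rightarrow>'m)) \<Longrightarrow> fm_asc (\<lambda>i. \<Sum>a\<in>A. K a i)"
  unfolding fm_asc_def by (auto intro!: fm_sum_mono)

lemma fm_asc_const[simp]: "fm_asc (\<lambda>i. c::'m)"
  unfolding fm_asc_def by simp

lemma fm_lub_const[simp]: "fm_lub (\<lambda>i. c::'m) = c"
  by (rule fm_lub_eqI) (auto simp: fm_is_lub_def)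

lemma fm_lub_sum: "finite A \<Longrightarrow> (\<And>a. a \<in> A \<Longrightarrow> fm_asc (K a :: nat\<Rightarrow>'m)) \<Longrightarrow>
   fm_lub (\<lambda>i. \<Sum>a\<in>A. K a i) = (\<Sum>a\<in>A. fm_lub (K a))"
proof (induction A rule: finite_induct)
  case (insert x F)
  have "fm_lub (\<lambda>i. \<Sum>a\<in>insert x F. K a i) = fm_lub (\<lambda>i. K x i + (\<Sum>a\<in>F. K a i))"
    using insert by simp
  also have "\<dots> = fm_lub (K x) + fm_lub (\<lambda>i. \<Sum>a\<in>F. K a i)"
    by (rule fm_lub_add) (use insert in \<open>auto intro!: fm_asc_sum\<close>)
  finally show ?case using insert by simp
qed simp

lemma fm_shift_asc: "fm_asc (K::nat\<Rightarrow>'m) \<Longrightarrow> fm_asc (\<lambda>i. K (i + N))"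
  unfolding fm_asc_def by simp

lemma fm_lub_shift: assumes K: "fm_asc (K::nat\<Rightarrow>'m)" shows "fm_lub (\<lambda>i. K (i + N)) = fm_lub K"
proof (rule fm_antisym)
  show "fm_le (fm_lub (\<lambda>i. K (i + N))) (fm_lub K)"
    by (rule fm_lub_least[OF fm_shift_asc[OF K]]) (rule fm_lub_upper[OF K])
  show "fm_le (fm_lub K) (fm_lub (\<lambda>i. K (i + N)))"
  proof (rule fm_lub_least[OF K])
    fix i
    have "fm_le (K i) (K (i + N))" using fm_asc_mono[OF K] by simp
    also have "fm_le \<dots> (fm_lub (\<lambda>i. K (i + N)))" using fm_lub_upper[OF fm_shift_asc[OF K]] .
    finally show "fm_le (K i) (fm_lub (\<lambda>i. K (i + N)))" .
  qed
qed

lemma fm_lub_Suc: "fm_asc (K::nat\<Rightarrow>'m) \<Longrightarrow> fm_lub (\<lambda>i. K (Suc i)) = fm_lub K"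
  using fm_lub_shift[of K 1] by simp

lemma fm_lub_eventually: assumes K: "fm_asc (K::nat\<Rightarrow>'m)" and L: "fm_asc L" and eq: "\<And>i. i \<ge> N \<Longrightarrow> K i = L i"
  shows "fm_lub K = fm_lub L"
proof -
  have "fm_lub K = fm_lub (\<lambda>i. K (i + N))" using fm_lub_shift[OF K] by simp
  also have "\<dots> = fm_lub (\<lambda>i. L (i + N))" using eq by simp
  also have "\<dots> = fm_lub L" using fm_lub_shift[OF L] .
  finally show ?thesis .
qed

lemma fm_cont_mono: assumes c: "fm_cont (f::'m\<Rightarrow>'m)" and le: "fm_le a b" shows "fm_le (f a) (f b)"
proof -
  define K where "K = (\<lambda>i::nat. if i = 0 then a else b)"
  have K: "fm_asc K" using le unfolding K_def fm_asc_def by auto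
  have "fm_lub K = b"
    by (rule fm_lub_eqI) (use le in \<open>auto simp: fm_is_lub_def K_def\<close>)
  moreover have "fm_is_lub (range (\<lambda>i. f (K i))) (f (fm_lub K))"
    using c K unfolding fm_cont_def by blast
  ultimately have "fm_le (f (K 0)) (f b)" unfolding fm_is_lub_def by auto
  then show ?thesis by (simp add: K_def)
qed

lemma fm_cont_asc: "fm_cont (f::'m\<Rightarrow>'m) \<Longrightarrow> fm_asc K \<Longrightarrow> fm_asc (\<lambda>i. f (K i))"
  unfolding fm_asc_def by (simp add: fm_cont_mono)

lemma fm_cont_lub: "fm_cont (f::'m\<Rightarrow>'m) \<Longrightarrow> fm_asc K \<Longrightarrow> f (fm_lub K) = fm_lub (\<lambda>i. f (K i))"
  unfolding fm_cont_def using fm_lub_eqI by metis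

lemma fm_psum_asc: "fm_asc (\<lambda>n. \<Sum>y\<in>A \<inter> {..<n}. (f y::'m))"
  unfolding fm_asc_def by (auto intro!: fm_sum_subset)

lemma fm_infsum_mono: "(\<And>a. a \<in> A \<Longrightarrow> fm_le (f a) (g a)) \<Longrightarrow> fm_le (fm_infsum f A) (fm_infsum (g::_\<Rightarrow>'m) A)"
  unfolding fm_infsum_def by (auto intro!: fm_lub_mono fm_psum_asc fm_sum_mono)

lemma fm_infsum_cong: "(\<And>a. a \<in> A \<Longrightarrow> f a = g a) \<Longrightarrow> fm_infsum f A = fm_infsum (g::_\<Rightarrow>'m) A"
  unfolding fm_infsum_def by (auto intro!: arg_cong[where f=fm_lub] sum.cong)

lemma fm_infsum_split: assumes D: "finite D" and disj: "A \<inter> D = {}"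
  shows "fm_infsum f (A \<union> D) = fm_infsum f A + sum (f::_\<Rightarrow>'m) D"
proof -
  obtain N where N: "\<forall>d\<in>D. d < N" using D finite_nat_bounded[of D] by (auto simp: lessThan_def subset_eq)
  have "fm_infsum f A + sum f D = fm_lub (\<lambda>n. sum f D + (\<Sum>y\<in>A \<inter> {..<n}. f y))"
    unfolding fm_infsum_def using fm_lub_add_axiom[OF fm_psum_asc] by (simp add: add.commute)
  also have "\<dots> = fm_infsum f (A \<union> D)"
    unfolding fm_infsum_def
  proof (rule fm_lub_eventually[where N=N])
    show "fm_asc (\<lambda>n. sum f D + (\<Sum>y\<in>A \<inter> {..<n}. f y))"
      using fm_psum_asc unfolding fm_asc_def by (simp add: fm_le_add)
    show "fm_asc (\<lambda>n. \<Sum>y\<in>(A \<union> D) \<inter> {..<n}. f y)" by (rule fm_psum_asc)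
    fix i assume "N \<le> i"
    then have "(A \<union> D) \<inter> {..<i} = (A \<inter> {..<i}) \<union> D" using N by auto
    moreover have "sum f (A \<inter> {..<i} \<union> D) = sum f (A \<inter> {..<i}) + sum f D"
      by (rule sum.union_disjoint) (use D disj in auto)
    ultimately show "sum f D + (\<Sum>y\<in>A \<inter> {..<i}. f y) = (\<Sum>y\<in>(A \<union> D) \<inter> {..<i}. f y)"
      by (simp add: add.commute)
  qed
  finally show ?thesis by simp
qed

end

definition fg_step :: "'m::comm_monoid_add fgraph \<Rightarrow> (nat \<Rightarrow> 'm) \<Rightarrow> nat \<Rightarrow> 'm" where
  "fg_step h f = (\<lambda>x. if x \<in> fX h then fg_inx h x + (\<Sum>y\<in>fX h. fE h y x (f y)) else 0)"

definition fg_iter :: "'m::comm_monoid_add fgraph \<Rightarrow> nat \<Rightarrow> nat \<Rightarrow> 'm" where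
  "fg_iter h n = (fg_step h ^^ n) (\<lambda>_. 0)"

definition fg_lf :: "'m::comm_monoid_add fgraph \<Rightarrow> nat \<Rightarrow> 'm" where
  "fg_lf h = (\<lambda>x. if x \<in> fX h then fm_lub (\<lambda>n. fg_iter h n x) else 0)"

lemma fg_iter_0[simp]: "fg_iter h 0 = (\<lambda>_. 0)" by (simp add: fg_iter_def)
lemma fg_iter_Suc[simp]: "fg_iter h (Suc n) = fg_step h (fg_iter h n)" by (simp add: fg_iter_def)

lemma fg_is_flow_step: "fg_is_flow h g \<longleftrightarrow> (\<forall>x\<in>fX h. fg_step h g x = g x)"
  unfolding fg_is_flow_def fg_step_def by auto

context
  fixes T :: "'m::comm_monoid_add itself"
  assumes FM: "flow_monoid TYPE('m)"
begin

context
  fixes h :: "'m fgraph"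
  assumes wf: "fg_wf h"
begin

lemma wf_fin: "finite (fX h)" using wf by (simp add: fg_wf_def)
lemma wf_cont: "x \<in> fX h \<Longrightarrow> fm_cont (fE h x y)" using wf by (simp add: fg_wf_def)

lemma step_mono: assumes le: "\<And>x. x \<in> fX h \<Longrightarrow> fm_le (f x) (g x)" shows "fm_le (fg_step h f x) (fg_step h g x)"
proof (cases "x \<in> fX h")
  case True
  have "fm_le (\<Sum>y\<in>fX h. fE h y x (f y)) (\<Sum>y\<in>fX h. fE h y x (g y))"
    by (rule fm_sum_mono, rule fm_cont_mono[OF FM wf_cont]) (use le in auto)
  then show ?thesis using True by (simp add: fm_le_add fg_step_def)
qed (simp add: fg_step_def)

lemma iter_step: "x \<in> fX h \<Longrightarrow> fm_le (fg_iter h n x) (fg_iter h (Suc n) x)"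
proof (induction n arbitrary: x)
  case (Suc n) then show ?case by (simp add: step_mono)
qed simp

lemma iter_asc: "x \<in> fX h \<Longrightarrow> fm_asc (\<lambda>n. fg_iter h n x)"
  unfolding fm_asc_def using iter_step by blast

lemma iter_le_pre: "(\<And>x. x \<in> fX h \<Longrightarrow> fm_le (fg_step h g x) (g x)) \<Longrightarrow> x \<in> fX h \<Longrightarrow> fm_le (fg_iter h n x) (g x)"
proof (induction n arbitrary: x)
  case (Suc n)
  have "fm_le (fg_step h (fg_iter h n) x) (fg_step h g x)" by (rule step_mono) (use Suc in auto)
  also have "fm_le \<dots> (g x)" using Suc by auto
  finally show ?case by simp
qed simp

lemma lf_least_pre: "(\<And>x. x \<in> fX h \<Longrightarrow> fm_le (fg_step h g x) (g x)) \<Longrightarrow> x \<in> fX h \<Longrightarrow> fm_le (fg_lf h x) (g x)"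
  unfolding fg_lf_def by (auto intro!: fm_lub_least[OF FM] iter_asc iter_le_pre)

lemma lf_flow: "fg_is_flow h (fg_lf h)"
  unfolding fg_is_flow_def
proof
  fix x assume x: "x \<in> fX h"
  have A: "\<And>y. y \<in> fX h \<Longrightarrow> fm_asc (\<lambda>n. fE h y x (fg_iter h n y))"
    by (rule fm_cont_asc[OF FM]) (auto intro: wf_cont iter_asc)
  have "fg_lf h x = fm_lub (\<lambda>n. fg_iter h (Suc n) x)"
    using x fm_lub_Suc[OF FM iter_asc[OF x]] by (simp add: fg_lf_def)
  also have "\<dots> = fm_lub (\<lambda>n. fg_inx h x + (\<Sum>y\<in>fX h. fE h y x (fg_iter h n y)))"
    using x by (simp add: fg_step_def)
  also have "\<dots> = fg_inx h x + fm_lub (\<lambda>n. \<Sum>y\<in>fX h. fE h y x (fg_iter h n y))"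
    by (rule fm_lub_add_axiom[OF FM, symmetric]) (use A in \<open>auto intro: fm_asc_sum[OF FM]\<close>)
  also have "\<dots> = fg_inx h x + (\<Sum>y\<in>fX h. fm_lub (\<lambda>n. fE h y x (fg_iter h n y)))"
    using fm_lub_sum[OF FM wf_fin A] by simp
  also have "\<dots> = fg_inx h x + (\<Sum>y\<in>fX h. fE h y x (fg_lf h y))"
  proof -
    have "fm_lub (\<lambda>n. fE h y x (fg_iter h n y)) = fE h y x (fg_lf h y)" if "y \<in> fX h" for y
      using fm_cont_lub[OF FM wf_cont iter_asc, OF that that] that by (simp add: fg_lf_def)
    then show ?thesis by simp
  qed
  finally show "fg_lf h x = fg_inx h x + (\<Sum>y\<in>fX h. fE h y x (fg_lf h y))" .
qed

lemma fg_flow_lf: "fg_flow h = fg_lf h"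
  unfolding fg_flow_def
proof (rule the_equality)
  show "fg_is_flow h (fg_lf h) \<and> (\<forall>g. fg_is_flow h g \<longrightarrow> (\<forall>x\<in>fX h. fm_le (fg_lf h x) (g x))) \<and> (\<forall>x. x \<notin> fX h \<longrightarrow> fg_lf h x = 0)"
    using lf_flow lf_least_pre by (auto simp: fg_is_flow_step fg_lf_def)
  fix f assume f: "fg_is_flow h f \<and> (\<forall>g. fg_is_flow h g \<longrightarrow> (\<forall>x\<in>fX h. fm_le (f x) (g x))) \<and> (\<forall>x. x \<notin> fX h \<longrightarrow> f x = 0)"
  show "f = fg_lf h"
  proof
    fix x show "f x = fg_lf h x"
    proof (cases "x \<in> fX h")
      case True
      then show ?thesis using f lf_flow lf_least_pre[of f x]
        by (auto simp: fg_is_flow_step intro: fm_antisym[OF FM])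
    qed (use f in \<open>auto simp: fg_lf_def\<close>)
  qed
qed

lemma flow_is: "fg_is_flow h (fg_flow h)"
  using lf_flow fg_flow_lf by simp

lemma flow_eq: "x \<in> fX h \<Longrightarrow> fg_flow h x = fg_inx h x + (\<Sum>y\<in>fX h. fE h y x (fg_flow h y))"
  using flow_is unfolding fg_is_flow_def by blast

lemma flow_least_pre: "(\<And>x. x \<in> fX h \<Longrightarrow> fm_le (fg_step h g x) (g x)) \<Longrightarrow> x \<in> fX h \<Longrightarrow> fm_le (fg_flow h x) (g x)"
  using lf_least_pre fg_flow_lf by simp

lemma flow_least: "fg_is_flow h g \<Longrightarrow> x \<in> fX h \<Longrightarrow> fm_le (fg_flow h x) (g x)"
  using flow_least_pre by (simp add: fg_is_flow_step)

lemma flow_lub: "x \<in> fX h \<Longrightarrow> fg_flow h x = fm_lub (\<lambda>n. fg_iter h n x)"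
  using fg_flow_lf by (simp add: fg_lf_def)

lemma iter_le_flow: "x \<in> fX h \<Longrightarrow> fm_le (fg_iter h n x) (fg_flow h x)"
  using flow_lub fm_lub_upper[OF FM iter_asc] by simp

lemma flow_unique: "fg_is_flow h f \<Longrightarrow> (\<And>g x. fg_is_flow h g \<Longrightarrow> x \<in> fX h \<Longrightarrow> fm_le (f x) (g x)) \<Longrightarrow> x \<in> fX h \<Longrightarrow> fg_flow h x = f x"
  by (meson flow_is flow_least fm_antisym[OF FM])

end

end

lemma fg_flow_cong:
  assumes "fX h = fX h'" "\<And>x y. x \<in> fX h \<Longrightarrow> y \<in> fX h \<Longrightarrow> fE h x y = fE h' x y"
    "\<And>z y. z \<notin> fX h \<Longrightarrow> y \<in> fX h \<Longrightarrow> fin h z y = fin h' z y"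
  shows "fg_flow h = fg_flow h'"
proof -
  have "fg_inx h x = fg_inx h' x" if "x \<in> fX h" for x
    unfolding fg_inx_def fm_infsum_def using assms that by (intro arg_cong[where f=fm_lub] ext sum.cong) auto
  then have "fg_is_flow h = fg_is_flow h'"
    unfolding fg_is_flow_def fun_eq_iff using assms by (metis (no_types, lifting) sum.cong)
  then show ?thesis unfolding fg_flow_def using assms(1) by simp
qed


lemma fg_wf_upd[simp]: "fg_wf (h\<lparr>fin := i\<rparr>) = fg_wf h"
  by (simp add: fg_wf_def)

lemma fg_wf_restr: "fg_wf h \<Longrightarrow> fg_wf (fg_restr h Y)"
  by (simp add: fg_wf_def fg_restr_def)

lemma fg_restr_simps[simp]: "fX (fg_restr h Y) = fX h \<inter> Y" "fE (fg_restr h Y) = fE h"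
  "fin (fg_restr h Y) = (\<lambda>z y. if z \<in> fX h then fE h z y (fg_flow h z) else fin h z y)"
  by (simp_all add: fg_restr_def)

context
  fixes T :: "'m::comm_monoid_add itself"
  assumes FM: "flow_monoid TYPE('m)"
begin

lemma flow_mono_in:
  fixes h :: "'m fgraph"
  assumes wf: "fg_wf h" and le: "\<And>z y. z \<notin> fX h \<Longrightarrow> y \<in> fX h \<Longrightarrow> fm_le (inn' z y) (fin h z y)"
    and x: "x \<in> fX h"
  shows "fm_le (fg_flow (h\<lparr>fin := inn'\<rparr>) x) (fg_flow h x)"
proof (rule flow_least_pre[OF FM])
  show "fg_wf (h\<lparr>fin := inn'\<rparr>)" using wf by simp
  show "x \<in> fX (h\<lparr>fin := inn'\<rparr>)" using x by simp
  fix x assume x: "x \<in> fX (h\<lparr>fin := inn'\<rparr>)"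
  have "fm_le (fg_inx (h\<lparr>fin := inn'\<rparr>) x) (fg_inx h x)"
    unfolding fg_inx_def using x le by (auto intro!: fm_infsum_mono[OF FM])
  then show "fm_le (fg_step (h\<lparr>fin := inn'\<rparr>) (fg_flow h) x) (fg_flow h x)"
    using x flow_eq[OF FM wf, of x] by (simp add: fg_step_def fm_le_add)
qed

lemma inx_restr:
  fixes h :: "'m fgraph"
  assumes fin: "finite (fX h)" and Y: "Y \<subseteq> fX h" and x: "x \<in> Y"
  shows "fg_inx (fg_restr h Y) x = fg_inx h x + (\<Sum>z\<in>fX h - Y. fE h z x (fg_flow h z))"
proof -
  let ?f = "\<lambda>z. fin (fg_restr h Y) z x"
  have eq: "- (fX h \<inter> Y) = - fX h \<union> (fX h - Y)" using Y by auto
  have "fg_inx (fg_restr h Y) x = fm_infsum ?f (- fX h \<union> (fX h - Y))"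
    unfolding fg_inx_def by (simp only: fg_restr_simps eq)
  also have "\<dots> = fm_infsum ?f (- fX h) + sum ?f (fX h - Y)"
    by (rule fm_infsum_split[OF FM]) (use fin in auto)
  also have "fm_infsum ?f (- fX h) = fg_inx h x"
    unfolding fg_inx_def by (rule fm_infsum_cong[OF FM]) simp
  also have "sum ?f (fX h - Y) = (\<Sum>z\<in>fX h - Y. fE h z x (fg_flow h z))"
    by (rule sum.cong) auto
  finally show ?thesis .
qed

lemma restr_flow:
  fixes h :: "'m fgraph"
  assumes wf: "fg_wf h" and Y: "Y \<subseteq> fX h" and y: "y \<in> Y"
  shows "fg_flow (fg_restr h Y) y = fg_flow h y"
proof -
  let ?R = "fg_restr h Y" and ?F = "fg_flow h" and ?X = "fX h"
  have wfR: "fg_wf ?R" using wf by (rule fg_wf_restr)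
  have fin: "finite ?X" using wf by (simp add: fg_wf_def)
  have XR: "fX ?R = Y" using Y by auto
  have split: "\<And>g y. (\<Sum>z\<in>?X. fE h z y (g z)) = (\<Sum>z\<in>?X - Y. fE h z y (g z)) + (\<Sum>z\<in>Y. fE h z y (g z))"
    using sum.subset_diff[OF Y fin] by blast
  have flowR: "fg_is_flow ?R ?F"
    unfolding fg_is_flow_def
  proof
    fix x assume "x \<in> fX ?R"
    then have x: "x \<in> Y" using XR by simp
    then have "?F x = fg_inx h x + (\<Sum>z\<in>?X. fE h z x (?F z))" using Y flow_eq[OF FM wf] by auto
    also have "\<dots> = fg_inx ?R x + (\<Sum>z\<in>Y. fE h z x (?F z))"
      using inx_restr[OF fin Y x] split by (simp add: add.assoc)
    finally show "?F x = fg_inx ?R x + (\<Sum>z\<in>fX ?R. fE ?R z x (?F z))" using XR by simp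
  qed
  have le1: "fm_le (fg_flow ?R y) (?F y)" by (rule flow_least[OF FM wfR flowR]) (use y Y in auto)
  have it: "fm_le (fg_iter h n x) (fg_flow ?R x)" if "x \<in> Y" for n x
    using that
  proof (induction n arbitrary: x)
    case (Suc n)
    have xX: "x \<in> ?X" using Suc Y by auto
    have "fg_iter h (Suc n) x = fg_inx h x + ((\<Sum>z\<in>?X - Y. fE h z x (fg_iter h n z)) + (\<Sum>z\<in>Y. fE h z x (fg_iter h n z)))"
      using xX split by (simp add: fg_step_def)
    also have "fm_le \<dots> (fg_inx h x + ((\<Sum>z\<in>?X - Y. fE h z x (?F z)) + (\<Sum>z\<in>Y. fE h z x (fg_flow ?R z))))"
    proof (intro fm_le_add fm_le_refl fm_sum_mono)
      fix z assume "z \<in> ?X - Y"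
      then show "fm_le (fE h z x (fg_iter h n z)) (fE h z x (?F z))"
        by (intro fm_cont_mono[OF FM wf_cont[OF FM wf]] iter_le_flow[OF FM wf]) auto
    next
      fix z assume z: "z \<in> Y"
      then show "fm_le (fE h z x (fg_iter h n z)) (fE h z x (fg_flow ?R z))"
        using Y by (intro fm_cont_mono[OF FM wf_cont[OF FM wf]] Suc.IH) auto
    qed
    also have "\<dots> = fg_inx ?R x + (\<Sum>z\<in>Y. fE h z x (fg_flow ?R z))"
      using inx_restr[OF fin Y Suc.prems] by (simp add: add.assoc)
    also have "\<dots> = fg_flow ?R x" using flow_eq[OF FM wfR, of x] Suc.prems xX XR by simp
    finally show ?case .
  qed simp
  have "fm_le (?F y) (fg_flow ?R y)"
  proof -
    have yX: "y \<in> ?X" using Y y by blast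
    have "fm_le (fm_lub (\<lambda>n. fg_iter h n y)) (fg_flow ?R y)"
      by (rule fm_lub_least[OF FM iter_asc[OF FM wf yX]]) (rule it[OF y])
    then show ?thesis using flow_lub[OF FM wf yX] by simp
  qed
  then show ?thesis using le1 fm_antisym[OF FM] by blast
qed

end


lemma tf_restr: "fg_tf (fg_restr h Y) i x w = fE h x w (fg_flow \<lparr>fX = fX h \<inter> Y, fE = fE h, fin = i\<rparr> x)"
  by (simp add: fg_tf_def fg_out_def fg_restr_def)

lemma restr_upd: "fg_restr (h\<lparr>fin := i\<rparr>) Y = \<lparr>fX = fX h \<inter> Y, fE = fE h,
   fin = (\<lambda>z y. if z \<in> fX h then fE h z y (fg_flow (h\<lparr>fin := i\<rparr>) z) else i z y)\<rparr>"
  by (simp add: fg_restr_def cong: if_cong)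

definition F1 :: "'m::comm_monoid_add fgraph \<Rightarrow> (nat \<Rightarrow> nat \<Rightarrow> 'm) \<Rightarrow> nat \<Rightarrow> 'm" where
  "F1 h1 inn' = fg_flow (h1\<lparr>fin := inn'\<rparr>)"
definition iota :: "'m::comm_monoid_add fgraph \<Rightarrow> (nat \<Rightarrow> nat \<Rightarrow> 'm) \<Rightarrow> nat \<Rightarrow> nat \<Rightarrow> 'm" where
  "iota h1 inn' = (\<lambda>z y. if z \<in> fX h1 then fE h1 z y (F1 h1 inn' z) else inn' z y)"
definition G2 :: "'m::comm_monoid_add fgraph \<Rightarrow> 'm fgraph \<Rightarrow> nat set \<Rightarrow> (nat \<Rightarrow> nat \<Rightarrow> 'm) \<Rightarrow> nat \<Rightarrow> 'm" where
  "G2 h1 h2 Y inn' = fg_flow \<lparr>fX = fX h1 \<inter> Y, fE = fE h2, fin = iota h1 inn'\<rparr>"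

context
  fixes T :: "'m::comm_monoid_add itself"
  assumes FM: "flow_monoid TYPE('m)"
begin

context
  fixes h1 h2 :: "'m fgraph" and Y :: "nat set" and inn' :: "nat \<Rightarrow> nat \<Rightarrow> 'm"
  assumes wf1: "fg_wf h1" and wf2: "fg_wf h2" and X12: "fX h2 = fX h1" and Y: "Y \<subseteq> fX h1"
    and hE: "\<And>x y. x \<in> fX h1 - Y \<Longrightarrow> fE h1 x y = fE h2 x y"
    and hT: "\<And>i x w. (\<And>z y. z \<notin> Y \<Longrightarrow> y \<in> Y \<Longrightarrow> fm_le (i z y) (fin (fg_restr h1 Y) z y)) \<Longrightarrow>
               x \<in> Y \<Longrightarrow> w \<notin> Y \<Longrightarrow> fg_tf (fg_restr h1 Y) i x w = fg_tf (fg_restr h2 Y) i x w"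
    and hb: "\<And>z y. z \<notin> fX h1 \<Longrightarrow> y \<in> fX h1 \<Longrightarrow> fm_le (inn' z y) (fin h1 z y)"
begin

lemma R1_eq: "fg_restr (h1\<lparr>fin := inn'\<rparr>) Y = \<lparr>fX = fX h1 \<inter> Y, fE = fE h1, fin = iota h1 inn'\<rparr>"
  by (simp add: restr_upd iota_def F1_def cong: if_cong)

lemma XY: "fX h1 \<inter> Y = Y" using Y by auto

lemma wf1': "fg_wf (h1\<lparr>fin := inn'\<rparr>)" using wf1 by simp

lemma star: assumes x: "x \<in> Y" and w: "w \<notin> Y"
  shows "fE h1 x w (F1 h1 inn' x) = fE h2 x w (G2 h1 h2 Y inn' x)"
proof -
  have bound: "fm_le (iota h1 inn' z y) (fin (fg_restr h1 Y) z y)" if "z \<notin> Y" "y \<in> Y" for z y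
  proof (cases "z \<in> fX h1")
    case True
    have "fm_le (F1 h1 inn' z) (fg_flow h1 z)"
      unfolding F1_def by (rule flow_mono_in[OF FM wf1 hb True])
    then show ?thesis using True by (simp add: iota_def fm_cont_mono[OF FM wf_cont[OF FM wf1 True]])
  next
    case False
    then show ?thesis using hb that Y by (auto simp: iota_def)
  qed
  have "fg_tf (fg_restr h1 Y) (iota h1 inn') x w = fg_tf (fg_restr h2 Y) (iota h1 inn') x w"
    by (rule hT[OF bound x w])
  moreover have "fg_tf (fg_restr h1 Y) (iota h1 inn') x w = fE h1 x w (F1 h1 inn' x)"
    using restr_flow[OF FM wf1' _ x, of] Y x R1_eq by (simp add: tf_restr F1_def)
  moreover have "fg_tf (fg_restr h2 Y) (iota h1 inn') x w = fE h2 x w (G2 h1 h2 Y inn' x)"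
    by (simp add: tf_restr G2_def X12)
  ultimately show ?thesis by simp
qed

lemma wf2': "fg_wf (h2\<lparr>fin := inn'\<rparr>)" using wf2 by simp

lemma half_le: assumes x: "x \<in> fX h1 - Y" shows "fm_le (fg_flow (h2\<lparr>fin := inn'\<rparr>) x) (F1 h1 inn' x)"
proof -
  define H where "H = (\<lambda>z. if z \<in> Y then G2 h1 h2 Y inn' z else F1 h1 inn' z)"
  let ?h2' = "h2\<lparr>fin := inn'\<rparr>" and ?h1' = "h1\<lparr>fin := inn'\<rparr>" and ?R2 = "\<lparr>fX = fX h1 \<inter> Y, fE = fE h2, fin = iota h1 inn'\<rparr>"
  have fin: "finite (fX h1)" using wf1 by (simp add: fg_wf_def)
  have wfR2: "fg_wf ?R2" using wf2 X12 by (auto simp: fg_wf_def)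
  have split: "\<And>g. (\<Sum>z\<in>fX h1. g z) = (\<Sum>z\<in>fX h1 - Y. g z) + (\<Sum>z\<in>Y. g z)"
    using sum.subset_diff[OF Y fin] by blast
  have inx: "fg_inx ?h2' x = fg_inx ?h1' x" for x
    by (simp add: fg_inx_def X12)
  have inxR2: "fg_inx ?R2 x = fg_inx ?h1' x + (\<Sum>z\<in>fX h1 - Y. fE h1 z x (F1 h1 inn' z))" if "x \<in> Y" for x
  proof -
    have "fg_inx ?R2 x = fg_inx (fg_restr ?h1' Y) x" by (simp add: R1_eq fg_inx_def)
    also have "\<dots> = fg_inx ?h1' x + (\<Sum>z\<in>fX h1 - Y. fE h1 z x (F1 h1 inn' z))"
      using inx_restr[OF FM _ _ that, of ?h1'] fin Y by (simp add: F1_def)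
    finally show ?thesis .
  qed
  have s1: "(\<Sum>z\<in>fX h1 - Y. fE h1 z x (F1 h1 inn' z)) = (\<Sum>z\<in>fX h1 - Y. fE h2 z x (H z))" for x
    by (rule sum.cong) (auto simp: hE H_def)
  have flowH: "fg_is_flow ?h2' H"
    unfolding fg_is_flow_def
  proof
    fix x assume "x \<in> fX ?h2'"
    then have xX: "x \<in> fX h1" using X12 by simp
    show "H x = fg_inx ?h2' x + (\<Sum>z\<in>fX ?h2'. fE ?h2' z x (H z))"
    proof (cases "x \<in> Y")
      case True
      have "H x = G2 h1 h2 Y inn' x" using True by (simp add: H_def)
      also have "\<dots> = fg_inx ?R2 x + (\<Sum>z\<in>Y. fE h2 z x (G2 h1 h2 Y inn' z))"
        using flow_eq[OF FM wfR2, of x] True XY by (simp add: G2_def)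
      also have "\<dots> = fg_inx ?h2' x + ((\<Sum>z\<in>fX h1 - Y. fE h2 z x (H z)) + (\<Sum>z\<in>Y. fE h2 z x (H z)))"
        using inxR2[OF True] s1[of x] inx[of x] by (simp add: add.assoc H_def)
      also have "\<dots> = fg_inx ?h2' x + (\<Sum>z\<in>fX ?h2'. fE ?h2' z x (H z))"
        using split[of "\<lambda>z. fE h2 z x (H z)"] X12 by simp
      finally show ?thesis .
    next
      case False
      have "H x = F1 h1 inn' x" using False by (simp add: H_def)
      also have "\<dots> = fg_inx ?h1' x + (\<Sum>z\<in>fX h1. fE h1 z x (F1 h1 inn' z))"
        using flow_eq[OF FM wf1', of x] xX by (simp add: F1_def)
      also have "\<dots> = fg_inx ?h1' x + ((\<Sum>z\<in>fX h1 - Y. fE h1 z x (F1 h1 inn' z)) + (\<Sum>z\<in>Y. fE h1 z x (F1 h1 inn' z)))"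
        using split[of "\<lambda>z. fE h1 z x (F1 h1 inn' z)"] by simp
      also have "(\<Sum>z\<in>Y. fE h1 z x (F1 h1 inn' z)) = (\<Sum>z\<in>Y. fE h2 z x (H z))"
        by (rule sum.cong) (auto simp: H_def star False)
      also have "fg_inx ?h1' x + ((\<Sum>z\<in>fX h1 - Y. fE h1 z x (F1 h1 inn' z)) + (\<Sum>z\<in>Y. fE h2 z x (H z))) = fg_inx ?h2' x + (\<Sum>z\<in>fX ?h2'. fE ?h2' z x (H z))"
        using split[of "\<lambda>z. fE h2 z x (H z)"] X12 s1[of x] inx[of x] by simp
      finally show ?thesis .
    qed
  qed
  have "fm_le (fg_flow ?h2' x) (H x)" using flow_least[OF FM wf2' flowH] x X12 by simp
  then show ?thesis using x by (simp add: H_def)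
qed

lemma G2_eq: assumes eqF: "\<And>z. z \<in> fX h1 - Y \<Longrightarrow> F1 h1 inn' z = fg_flow (h2\<lparr>fin := inn'\<rparr>) z" and x: "x \<in> Y"
  shows "G2 h1 h2 Y inn' x = fg_flow (h2\<lparr>fin := inn'\<rparr>) x"
proof -
  have "G2 h1 h2 Y inn' = fg_flow (fg_restr (h2\<lparr>fin := inn'\<rparr>) Y)"
    unfolding G2_def
  proof (rule fg_flow_cong)
    fix z y assume "z \<notin> fX \<lparr>fX = fX h1 \<inter> Y, fE = fE h2, fin = iota h1 inn'\<rparr>" "y \<in> fX \<lparr>fX = fX h1 \<inter> Y, fE = fE h2, fin = iota h1 inn'\<rparr>"
    then show "fin \<lparr>fX = fX h1 \<inter> Y, fE = fE h2, fin = iota h1 inn'\<rparr> z y = fin (fg_restr (h2\<lparr>fin := inn'\<rparr>) Y) z y"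
      using eqF hE X12 by (auto simp: iota_def restr_upd)
  qed (auto simp: restr_upd X12)
  then show ?thesis using restr_flow[OF FM wf2', of Y x] Y X12 x by simp
qed


end

end


lemma fp_full:
  fixes h1 h2 :: "'m::comm_monoid_add fgraph"
  assumes FM: "flow_monoid TYPE('m)" and wf1: "fg_wf h1" and wf2: "fg_wf h2" and X12: "fX h1 = fX h2"
    and hin: "fg_in_eq (fX h1) (fin h1) (fin h2)" and YFP: "Y \<in> fg_FP h1 h2"
  shows "fX h1 \<in> fg_FP h1 h2"
proof -
  let ?X = "fX h1"
  have Y: "Y \<subseteq> ?X" and ap: "fg_approx (fg_restr h1 Y) (fg_restr h2 Y)"
    and eq: "fg_eq (fg_restr h1 (?X - Y)) (fg_restr h2 (?X - Y))" using YFP by (auto simp: fg_FP_def)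
  have XY: "?X \<inter> Y = Y" using Y by auto
  have hE: "fE h1 x y = fE h2 x y" if "x \<in> ?X - Y" for x y
    using eq that by (auto simp: fg_eq_def)
  have hE': "fE h2 x y = fE h1 x y" if "x \<in> fX h2 - Y" for x y
    using hE that X12 by simp
  have hB: "fin (fg_restr h1 Y) z y = fin (fg_restr h2 Y) z y" if "z \<notin> Y" "y \<in> Y" for z y
    using ap that XY unfolding fg_approx_def fg_in_eq_def by (simp only: fg_restr_simps(1)) blast
  have hT: "fg_tf (fg_restr h1 Y) i x w = fg_tf (fg_restr h2 Y) i x w"
    if "\<And>z y. z \<notin> Y \<Longrightarrow> y \<in> Y \<Longrightarrow> fm_le (i z y) (fin (fg_restr h1 Y) z y)" "x \<in> Y" "w \<notin> Y" for i x w
    using ap that XY unfolding fg_approx_def fg_tf_eq_upto_def by (simp only: fg_restr_simps(1)) blast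
  have hT': "fg_tf (fg_restr h2 Y) i x w = fg_tf (fg_restr h1 Y) i x w"
    if "\<And>z y. z \<notin> Y \<Longrightarrow> y \<in> Y \<Longrightarrow> fm_le (i z y) (fin (fg_restr h2 Y) z y)" "x \<in> Y" "w \<notin> Y" for i x w
  proof -
    have "fm_le (i z y) (fin (fg_restr h1 Y) z y)" if "z \<notin> Y" "y \<in> Y" for z y
      using that hB[OF that] \<open>\<And>z y. z \<notin> Y \<Longrightarrow> y \<in> Y \<Longrightarrow> fm_le (i z y) (fin (fg_restr h2 Y) z y)\<close>[OF that]
      by (simp only:)
    from hT[of i x w, OF this that(2,3)] show ?thesis by (rule sym)
  qed
  have "fg_approx (fg_restr h1 ?X) (fg_restr h2 ?X)"
    unfolding fg_approx_def
  proof (intro conjI)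
    show "fX (fg_restr h1 ?X) = fX (fg_restr h2 ?X)" using X12 by simp
    show "fg_in_eq (fX (fg_restr h1 ?X)) (fin (fg_restr h1 ?X)) (fin (fg_restr h2 ?X))"
      using hin X12 by (auto simp: fg_in_eq_def)
    show "fg_tf_eq_upto (fX (fg_restr h1 ?X)) (fg_restr h1 ?X) (fg_restr h2 ?X) (fin (fg_restr h1 ?X))"
      unfolding fg_tf_eq_upto_def
    proof (intro allI impI ballI)
      fix inn' x w
      assume bnd: "\<forall>z. z \<notin> fX (fg_restr h1 ?X) \<longrightarrow> (\<forall>y\<in>fX (fg_restr h1 ?X). fm_le (inn' z y) (fin (fg_restr h1 ?X) z y))"
        and x: "x \<in> fX (fg_restr h1 ?X)" and w: "w \<notin> fX (fg_restr h1 ?X)"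
      have x: "x \<in> ?X" and w: "w \<notin> ?X" using x w by auto
      have hb: "fm_le (inn' z y) (fin h1 z y)" if "z \<notin> ?X" "y \<in> ?X" for z y
        using bnd that by auto
      have hb': "fm_le (inn' z y) (fin h2 z y)" if "z \<notin> fX h2" "y \<in> fX h2" for z y
        using hb[of z y] that hin X12 by (auto simp: fg_in_eq_def)
      let ?F1 = "fg_flow (h1\<lparr>fin := inn'\<rparr>)" and ?F2 = "fg_flow (h2\<lparr>fin := inn'\<rparr>)"
      have le21: "fm_le (?F2 z) (?F1 z)" if "z \<in> ?X - Y" for z
        using half_le[OF FM wf1 wf2 X12[symmetric] Y hE hT hb that] by (simp add: F1_def)
      have le12: "fm_le (?F1 z) (?F2 z)" if "z \<in> ?X - Y" for z
        using half_le[OF FM wf2 wf1 X12 _ hE' hT' hb', of z] that Y X12 by (simp add: F1_def)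
      have eqF: "?F1 z = ?F2 z" if "z \<in> ?X - Y" for z
        using le12 le21 that fm_antisym[OF FM] by blast
      have "fE h1 x w (?F1 x) = fE h2 x w (?F2 x)"
      proof (cases "x \<in> Y")
        case True
        have "fE h1 x w (?F1 x) = fE h2 x w (G2 h1 h2 Y inn' x)"
          using star[OF FM wf1 wf2 X12[symmetric] Y hE hT hb True] w Y by (auto simp: F1_def)
        also have "G2 h1 h2 Y inn' x = ?F2 x"
          by (rule G2_eq[OF FM wf1 wf2 X12[symmetric] Y hE hT hb _ True]) (auto simp: F1_def eqF)
        finally show ?thesis .
      next
        case False
        then show ?thesis using hE[of x w] eqF[of x] x by simp
      qed
      moreover have "fg_tf (fg_restr h1 ?X) inn' x w = fE h1 x w (?F1 x)"
        unfolding tf_restr by (rule arg_cong[where f="fE h1 x w"], rule fun_cong, rule fg_flow_cong) auto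
      moreover have "fg_tf (fg_restr h2 ?X) inn' x w = fE h2 x w (?F2 x)"
        unfolding tf_restr by (rule arg_cong[where f="fE h2 x w"], rule fun_cong, rule fg_flow_cong) (use X12 in auto)
      ultimately show "fg_tf (fg_restr h1 ?X) inn' x w = fg_tf (fg_restr h2 ?X) inn' x w" by simp
    qed
  qed
  moreover have "fg_eq (fg_restr h1 (?X - ?X)) (fg_restr h2 (?X - ?X))"
    by (simp add: fg_eq_def fg_in_eq_def)
  ultimately show ?thesis by (simp add: fg_FP_def)
qed


lemma fm_le_enat: "fm_le (a::enat) b \<longleftrightarrow> a \<le> b"
  unfolding fm_le_def by (simp add: le_iff_add)

lemma fm_is_lub_enat: "fm_is_lub S (l::enat) \<longleftrightarrow> l = Sup S"
  unfolding fm_is_lub_def fm_le_enat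
  by (metis Sup_least Sup_upper order_antisym)

lemma fm_lub_enat: "fm_lub (K :: nat \<Rightarrow> enat) = Sup (range K)"
  unfolding fm_lub_def fm_is_lub_enat by simp

lemma enat_add_SUP: fixes K :: "nat \<Rightarrow> enat" shows "(n::enat) + Sup (range K) = Sup (range (\<lambda>i. n + K i))"
proof (rule order_antisym)
  show "Sup (range (\<lambda>i. n + K i)) \<le> n + Sup (range K)"
    by (rule SUP_least) (simp add: add_left_mono SUP_upper)
  show "n + Sup (range K) \<le> Sup (range (\<lambda>i. n + K i))"
  proof (cases "Sup (range (\<lambda>i. n + K i))")
    case (enat t)
    then have b: "n + K i \<le> enat t" for i by (metis SUP_upper UNIV_I)
    then obtain m where n: "n = enat m" by (cases n) auto
    have "K i \<le> enat (t - m)" for i using b[of i] n by (cases "K i") auto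
    then have "Sup (range K) \<le> enat (t - m)" by (simp add: SUP_least)
    moreover have "m \<le> t" using b[of 0] n by (cases "K 0") auto
    ultimately show ?thesis using n enat by (cases "Sup (range K)") auto
  qed simp
qed

lemma FM_enat: "flow_monoid TYPE(enat)"
  unfolding flow_monoid_def
  by (auto simp: fm_le_enat fm_is_lub_enat fm_lub_enat enat_add_SUP)

lemma fm_cont_enat: "fm_cont (f :: enat \<Rightarrow> enat) \<longleftrightarrow> (\<forall>K. fm_asc K \<longrightarrow> f (Sup (range K)) = Sup (range (\<lambda>i. f (K i))))"
  unfolding fm_cont_def fm_is_lub_enat fm_lub_enat by simp

lemma cont_const: "fm_cont (\<lambda>_::enat. c::enat)"
  unfolding fm_cont_enat by simp

lemma cont_id: "fm_cont (id :: enat \<Rightarrow> enat)"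
  unfolding fm_cont_enat by (simp add: image_comp)

lemma cont_max1: "fm_cont (\<lambda>v::enat. max v 1)"
  unfolding fm_cont_enat
proof (intro allI impI)
  fix K :: "nat \<Rightarrow> enat"
  show "max (Sup (range K)) 1 = Sup (range (\<lambda>i. max (K i) 1))"
  proof (rule order_antisym)
    show "max (Sup (range K)) 1 \<le> Sup (range (\<lambda>i. max (K i) 1))"
    proof -
      have "Sup (range K) \<le> Sup (range (\<lambda>i. max (K i) 1))" by (rule SUP_mono) (meson max.cobounded1 UNIV_I)
      moreover have "1 \<le> Sup (range (\<lambda>i. max (K i) 1))" by (rule SUP_upper2[of 0]) auto
      ultimately show ?thesis by simp
    qed
    show "Sup (range (\<lambda>i. max (K i) 1)) \<le> max (Sup (range K)) 1"
      by (rule SUP_least) (meson SUP_upper UNIV_I max.mono order_refl)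
  qed
qed

definition Ec :: "nat \<Rightarrow> nat \<Rightarrow> enat \<Rightarrow> enat" where
  "Ec x y = (if (x = 1 \<or> x = 2) \<and> y = 0 then (\<lambda>_. 1) else (\<lambda>_. 0))"
definition E1 :: "nat \<Rightarrow> nat \<Rightarrow> enat \<Rightarrow> enat" where
  "E1 x y = (if x = 0 \<and> y = 3 then id else Ec x y)"
definition E2 :: "nat \<Rightarrow> nat \<Rightarrow> enat \<Rightarrow> enat" where
  "E2 x y = (if x = 0 \<and> y = 3 then (\<lambda>v. max v 1) else Ec x y)"
definition H1 :: "enat fgraph" where "H1 = \<lparr>fX = {0,1,2}, fE = E1, fin = (\<lambda>_ _. 0)\<rparr>"
definition H2 :: "enat fgraph" where "H2 = \<lparr>fX = {0,1,2}, fE = E2, fin = (\<lambda>_ _. 0)\<rparr>"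

lemma cont_Ec: "fm_cont (Ec x y)" by (simp add: Ec_def cont_const)
lemma cont_E1: "fm_cont (E1 x y)" by (simp add: E1_def cont_Ec cont_id)
lemma cont_E2: "fm_cont (E2 x y)" by (simp add: E2_def cont_Ec cont_max1)
lemma wf_H1: "fg_wf H1" by (simp add: fg_wf_def H1_def E1_def cont_Ec cont_id)
lemma wf_H2: "fg_wf H2" by (simp add: fg_wf_def H2_def E2_def cont_Ec cont_max1)

lemma E12: "\<not> (x = 0 \<and> y = 3) \<Longrightarrow> E1 x y = E2 x y" by (metis E1_def E2_def)

lemma flow12: "fg_flow H1 = fg_flow H2"
  by (rule fg_flow_cong) (auto simp: H1_def H2_def E12)

lemma inx_zero: "fin h = (\<lambda>_ _. 0) \<Longrightarrow> fg_inx (h :: enat fgraph) x = 0"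
  by (simp add: fg_inx_def fm_infsum_def fm_lub_enat)


lemma H_simps[simp]: "fX H1 = {0,1,2}" "fE H1 = E1" "fin H1 = (\<lambda>_ _. 0)"
  "fX H2 = {0,1,2}" "fE H2 = E2" "fin H2 = (\<lambda>_ _. 0)"
  by (simp_all add: H1_def H2_def)

lemma E12x: "x \<noteq> 0 \<Longrightarrow> E1 x y = E2 x y" and E12y: "y \<noteq> 3 \<Longrightarrow> E1 x y = E2 x y"
  by (simp_all add: E12)

lemma E1_a0: "a \<in> {1,2} \<Longrightarrow> E1 a 0 = (\<lambda>_. 1)" by (auto simp: E1_def Ec_def)
lemma E1_00: "E1 0 0 = (\<lambda>_. 0)" by (simp add: E1_def Ec_def)
lemma E1_03: "E1 0 3 = id" by (simp add: E1_def)
lemma E2_03: "E2 0 3 = (\<lambda>v. max v 1)" by (simp add: E2_def)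
lemma E2_00: "E2 0 0 = (\<lambda>_. 0)" by (simp add: E2_def Ec_def)

lemma fp_pair: assumes a: "a \<in> {1,2}" shows "{0,a} \<in> fg_FP H1 H2"
proof -
  let ?Y = "{0,a} :: nat set"
  have XY: "{0,1,2} \<inter> ?Y = ?Y" using a by auto
  have a0: "a \<noteq> 0" using a by auto
  have ap: "fg_approx (fg_restr H1 ?Y) (fg_restr H2 ?Y)"
    unfolding fg_approx_def
  proof (intro conjI)
    show "fX (fg_restr H1 ?Y) = fX (fg_restr H2 ?Y)" by simp
    show "fg_in_eq (fX (fg_restr H1 ?Y)) (fin (fg_restr H1 ?Y)) (fin (fg_restr H2 ?Y))"
      unfolding fg_in_eq_def using a by (auto simp: flow12 E12y)
    show "fg_tf_eq_upto (fX (fg_restr H1 ?Y)) (fg_restr H1 ?Y) (fg_restr H2 ?Y) (fin (fg_restr H1 ?Y))"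
      unfolding fg_tf_eq_upto_def
    proof (intro allI impI ballI)
      fix inn' x w
      assume x: "x \<in> fX (fg_restr H1 ?Y)" and w: "w \<notin> fX (fg_restr H1 ?Y)"
      let ?G1 = "\<lparr>fX = ?Y, fE = E1, fin = inn'\<rparr>" and ?G2 = "\<lparr>fX = ?Y, fE = E2, fin = inn'\<rparr>"
      have x: "x \<in> ?Y" and w: "w \<notin> ?Y" using x w XY by auto
      have wfG1: "fg_wf ?G1" by (simp add: fg_wf_def cont_E1)
      have fl: "fg_flow ?G1 = fg_flow ?G2"
        by (rule fg_flow_cong) (use a in \<open>auto simp: E12y\<close>)
      have g0: "1 \<le> fg_flow ?G1 0"
      proof -
        have "fg_flow ?G1 0 = fg_inx ?G1 0 + (\<Sum>y\<in>?Y. E1 y 0 (fg_flow ?G1 y))"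
          using flow_eq[OF FM_enat wfG1, of 0] by simp
        also have "\<dots> = fg_inx ?G1 0 + 1" using a0 a by (simp add: E1_a0 E1_00)
        finally show ?thesis by simp
      qed
      have "E1 x w (fg_flow ?G1 x) = E2 x w (fg_flow ?G2 x)"
      proof (cases "x = 0 \<and> w = 3")
        case True
        then show ?thesis using g0 fl by (simp add: E1_03 E2_03 max_absorb1)
      next
        case False
        then show ?thesis using fl E12 by simp
      qed
      then show "fg_tf (fg_restr H1 ?Y) inn' x w = fg_tf (fg_restr H2 ?Y) inn' x w"
        by (simp only: tf_restr H_simps XY)
    qed
  qed
  have eq: "fg_eq (fg_restr H1 ({0,1,2} - ?Y)) (fg_restr H2 ({0,1,2} - ?Y))"
    unfolding fg_eq_def fg_in_eq_def by (auto simp: flow12 E12x E12y)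
  show ?thesis using ap eq a by (simp add: fg_FP_def)
qed

lemma fp_has0: assumes "Z \<in> fg_FP H1 H2" shows "0 \<in> Z"
proof (rule ccontr)
  assume "0 \<notin> Z"
  moreover have "fg_eq (fg_restr H1 ({0,1,2} - Z)) (fg_restr H2 ({0,1,2} - Z))"
    using assms by (simp add: fg_FP_def)
  ultimately have "E1 0 3 = E2 0 3" unfolding fg_eq_def by auto
  then have "id = (\<lambda>v::enat. max v 1)" by (simp add: E1_03 E2_03)
  from fun_cong[OF this, of 0] show False by simp
qed

lemma flow_single_zero:
  fixes E :: "nat \<Rightarrow> nat \<Rightarrow> enat \<Rightarrow> enat"
  assumes "E 0 0 = (\<lambda>_. 0)" "\<And>y. fm_cont (E 0 y)"
  shows "fg_flow \<lparr>fX = {0}, fE = E, fin = (\<lambda>_ _. 0)\<rparr> 0 = 0"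
proof -
  have wf: "fg_wf \<lparr>fX = {0}, fE = E, fin = (\<lambda>_ _. 0)\<rparr>" using assms by (simp add: fg_wf_def)
  show ?thesis using flow_eq[OF FM_enat wf, of 0] assms by (simp add: inx_zero)
qed

lemma not_fp0: "{0} \<notin> fg_FP H1 H2"
proof
  assume "{0} \<in> fg_FP H1 H2"
  then have ap: "fg_approx (fg_restr H1 {0}) (fg_restr H2 {0})" by (simp add: fg_FP_def)
  have X0: "{0,1,2} \<inter> {0} = ({0}::nat set)" by auto
  have "fg_tf (fg_restr H1 {0}) (\<lambda>_ _. 0) 0 3 = fg_tf (fg_restr H2 {0}) (\<lambda>_ _. 0) 0 3"
    using ap unfolding fg_approx_def fg_tf_eq_upto_def by (simp add: X0)
  moreover have "fg_tf (fg_restr H1 {0}) (\<lambda>_ _. 0) 0 3 = 0"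
    using flow_single_zero[of E1] by (simp add: tf_restr X0 E1_00 E1_03 cont_E1)
  moreover have "fg_tf (fg_restr H2 {0}) (\<lambda>_ _. 0) 0 3 = 1"
    using flow_single_zero[of E2] by (simp add: tf_restr X0 E2_00 E2_03 cont_E2)
  ultimately show False by simp
qed

theorem proposition1:
  shows "(\<forall>(h1 :: 'm::comm_monoid_add fgraph) h2.
            flow_monoid TYPE('m) \<longrightarrow> fg_wf h1 \<longrightarrow> fg_wf h2 \<longrightarrow>
            fX h1 = fX h2 \<longrightarrow> fg_in_eq (fX h1) (fin h1) (fin h2) \<longrightarrow>
            (fg_FP h1 h2 \<noteq> {} \<longleftrightarrow> fX h1 \<in> fg_FP h1 h2))
       \<and> (flow_monoid TYPE(enat) \<and>
          (\<exists>(h1 :: enat fgraph) h2 Y1 Y2.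
             fg_wf h1 \<and> fg_wf h2 \<and> fX h1 = fX h2 \<and> fg_in_eq (fX h1) (fin h1) (fin h2) \<and>
             Y1 \<in> fg_FP h1 h2 \<and> Y2 \<in> fg_FP h1 h2 \<and> Y1 \<inter> Y2 \<notin> fg_FP h1 h2 \<and>
             \<not> (\<exists>!Y. Y \<in> fg_FP h1 h2 \<and> (\<forall>Z\<in>fg_FP h1 h2. Z \<subseteq> Y \<longrightarrow> Z = Y))))"
proof (intro conjI)
  show "\<forall>(h1 :: 'm::comm_monoid_add fgraph) h2.
            flow_monoid TYPE('m) \<longrightarrow> fg_wf h1 \<longrightarrow> fg_wf h2 \<longrightarrow>
            fX h1 = fX h2 \<longrightarrow> fg_in_eq (fX h1) (fin h1) (fin h2) \<longrightarrow>
            (fg_FP h1 h2 \<noteq> {} \<longleftrightarrow> fX h1 \<in> fg_FP h1 h2)"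
  proof (intro allI impI)
    fix h1 h2 :: "'m fgraph"
    assume FM: "flow_monoid TYPE('m)" and wf1: "fg_wf h1" and wf2: "fg_wf h2" and X12: "fX h1 = fX h2"
      and hin: "fg_in_eq (fX h1) (fin h1) (fin h2)"
    show "fg_FP h1 h2 \<noteq> {} \<longleftrightarrow> fX h1 \<in> fg_FP h1 h2"
      using fp_full[OF FM wf1 wf2 X12 hin] by blast
  qed
  show "flow_monoid TYPE(enat)" by (rule FM_enat)
  have min: "\<forall>Z\<in>fg_FP H1 H2. Z \<subseteq> {0,a} \<longrightarrow> Z = {0,a}" if a: "a \<in> {1,2}" for a :: nat
  proof (intro ballI impI)
    fix Z assume Z: "Z \<in> fg_FP H1 H2" and sub: "Z \<subseteq> {0,a}"
    have "0 \<in> Z" using fp_has0[OF Z] .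
    moreover have "Z \<noteq> {0}" using Z not_fp0 by blast
    ultimately show "Z = {0,a}" using sub by blast
  qed
  have nu: "\<not> (\<exists>!Y. Y \<in> fg_FP H1 H2 \<and> (\<forall>Z\<in>fg_FP H1 H2. Z \<subseteq> Y \<longrightarrow> Z = Y))"
  proof
    assume "\<exists>!Y. Y \<in> fg_FP H1 H2 \<and> (\<forall>Z\<in>fg_FP H1 H2. Z \<subseteq> Y \<longrightarrow> Z = Y)"
    then obtain Y where uq: "\<And>Y'. Y' \<in> fg_FP H1 H2 \<and> (\<forall>Z\<in>fg_FP H1 H2. Z \<subseteq> Y' \<longrightarrow> Z = Y') \<Longrightarrow> Y' = Y"
      by (elim ex1E) blast
    have p1: "{0,1} \<in> fg_FP H1 H2 \<and> (\<forall>Z\<in>fg_FP H1 H2. Z \<subseteq> {0,1} \<longrightarrow> Z = {0,1})"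
      using fp_pair[of 1] min[of 1] by simp
    have p2: "{0,2} \<in> fg_FP H1 H2 \<and> (\<forall>Z\<in>fg_FP H1 H2. Z \<subseteq> {0,2} \<longrightarrow> Z = {0,2})"
      using fp_pair[of 2] min[of 2] by simp
    have "{0,1} = ({0,2} :: nat set)" using uq[OF p1] uq[OF p2] by simp
    then have "(1::nat) \<in> {0,2}" by (metis insertI1 insertI2)
    then show False by simp
  qed
  have int: "{0,1} \<inter> {0,2} = ({0} :: nat set)" by auto
  show "\<exists>(h1 :: enat fgraph) h2 Y1 Y2.
             fg_wf h1 \<and> fg_wf h2 \<and> fX h1 = fX h2 \<and> fg_in_eq (fX h1) (fin h1) (fin h2) \<and>
             Y1 \<in> fg_FP h1 h2 \<and> Y2 \<in> fg_FP h1 h2 \<and> Y1 \<inter> Y2 \<notin> fg_FP h1 h2 \<and>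
             \<not> (\<exists>!Y. Y \<in> fg_FP h1 h2 \<and> (\<forall>Z\<in>fg_FP h1 h2. Z \<subseteq> Y \<longrightarrow> Z = Y))"
    apply (rule exI[of _ H1], rule exI[of _ H2], rule exI[of _ "{0,1}"], rule exI[of _ "{0,2}"])
  proof (intro conjI)
    show "fg_wf H1" by (rule wf_H1)
    show "fg_wf H2" by (rule wf_H2)
    show "fX H1 = fX H2" by simp
    show "fg_in_eq (fX H1) (fin H1) (fin H2)" by (simp add: fg_in_eq_def)
    show "{0,1} \<in> fg_FP H1 H2" by (rule fp_pair) simp
    show "{0,2} \<in> fg_FP H1 H2" by (rule fp_pair) simp
    show "{0,1} \<inter> {0,2} \<notin> fg_FP H1 H2" unfolding int by (rule not_fp0)
    show "\<not> (\<exists>!Y. Y \<in> fg_FP H1 H2 \<and> (\<forall>Z\<in>fg_FP H1 H2. Z \<subseteq> Y \<longrightarrow> Z = Y))" by (rule nu)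
  qed
qed

end
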